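(* Let $\rho$ be a linear pseudometric on a totally ordered set $A$ and let $\rho'$ be the associated Kantorovich pseudometric on probability measures on $A$. If $(Y_\mu,Y_\nu)$ is an ordered coupling of two probability measures $\mu,\nu$ on $A$, then $\mathbb{E}[\rho(Y_\mu,Y_\nu)]=\rho'(\mu,\nu)$. Moreover, $\rho'$ is linear for the stochastic order: if $\mu\le_{st}\nu\le_{st}\eta$ then $\rho'(\mu,\eta)=\rho'(\mu,\nu)+\rho'(\nu,\eta)$.
   Context: $A$ is a standard Borel space with a measurable total order, and $\rho$ is measurable (and such that the expectations considered are finite, e.g. $\rho$ bounded). A pseudometric $\rho$ on an ordered set is linear if $\rho(a,c)=\rho(a,b)+\rho(b,c)$ whenever $a\le b\le c$. The Kantorovich pseudometric is $\rho'(\mu,\nu)=\inf\mathbb{E}[\rho(X_\mu,X_\nu)]$ over all couplings $(X_\mu,X_\nu)$ of $\mu$ and $\nu$. A coupling $(X_\mu,X_\nu)$ is ordered if $\mathbb{P}(X_\mu\le X_\nu)=1$ or $\mathbb{P}(X_\nu\le X_\mu)=1$. $\mu\le_{st}\nu$ means there is a coupling with $X_\mu\le X_\nu$ a.s. *)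

theory Defs
  imports "HOL-Probability.Probability"
begin

text \<open>The ground set A is a type 'a carrying a Polish topology; its Borel sigma-algebra
  makes it a standard Borel space.  The total order is an explicit relation R on 'a
  (R = {(a,b). a \<le> b}).\<close>

definition pseudometric :: "('a \<Rightarrow> 'a \<Rightarrow> real) \<Rightarrow> bool" where
  "pseudometric \<rho> \<longleftrightarrow>
     (\<forall>x. \<rho> x x = 0) \<and> (\<forall>x y. 0 \<le> \<rho> x y) \<and> (\<forall>x y. \<rho> x y = \<rho> y x) \<and>
     (\<forall>x y z. \<rho> x z \<le> \<rho> x y + \<rho> y z)"

definition linear_pseudometric :: "('a \<times> 'a) set \<Rightarrow> ('a \<Rightarrow> 'a \<Rightarrow> real) \<Rightarrow> bool" where
  "linear_pseudometric R \<rho> \<longleftrightarrow> pseudometric \<rho> \<and>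
     (\<forall>a b c. (a, b) \<in> R \<longrightarrow> (b, c) \<in> R \<longrightarrow> \<rho> a c = \<rho> a b + \<rho> b c)"

definition prob_on :: "'a::topological_space measure \<Rightarrow> bool" where
  "prob_on \<mu> \<longleftrightarrow> prob_space \<mu> \<and> sets \<mu> = sets borel"

text \<open>A coupling of \<mu> and \<nu>, represented by the joint law of (X_\<mu>, X_\<nu>).\<close>
definition coupling :: "'a::topological_space measure \<Rightarrow> 'a measure \<Rightarrow> ('a \<times> 'a) measure \<Rightarrow> bool" where
  "coupling \<mu> \<nu> \<pi> \<longleftrightarrow> prob_space \<pi> \<and> sets \<pi> = sets (borel \<Otimes>\<^sub>M borel) \<and>
     distr \<pi> borel fst = \<mu> \<and> distr \<pi> borel snd = \<nu>"

definition ordered_coupling :: "('a \<times> 'a) set \<Rightarrow> 'a::topological_space measure \<Rightarrow> 'a measure \<Rightarrow> ('a \<times> 'a) measure \<Rightarrow> bool" where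
  "ordered_coupling R \<mu> \<nu> \<pi> \<longleftrightarrow> coupling \<mu> \<nu> \<pi> \<and>
     ((AE p in \<pi>. (fst p, snd p) \<in> R) \<or> (AE p in \<pi>. (snd p, fst p) \<in> R))"

definition stoch_le :: "('a \<times> 'a) set \<Rightarrow> 'a::topological_space measure \<Rightarrow> 'a measure \<Rightarrow> bool" where
  "stoch_le R \<mu> \<nu> \<longleftrightarrow> (\<exists>\<pi>. coupling \<mu> \<nu> \<pi> \<and> (AE p in \<pi>. (fst p, snd p) \<in> R))"

definition kantorovich :: "('a \<Rightarrow> 'a \<Rightarrow> real) \<Rightarrow> 'a::topological_space measure \<Rightarrow> 'a measure \<Rightarrow> real" where
  "kantorovich \<rho> \<mu> \<nu> = (INF \<pi> \<in> {\<pi>. coupling \<mu> \<nu> \<pi>}. \<integral>p. \<rho> (fst p) (snd p) \<partial>\<pi>)"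

end

theory Submission
  imports Defs
begin

context
  fixes R :: "('a::polish_space \<times> 'a) set" and \<rho> :: "'a \<Rightarrow> 'a \<Rightarrow> real" and B :: real and z0 :: 'a
  assumes lo: "linear_order R"
    and Rm: "R \<in> sets (borel \<Otimes>\<^sub>M borel)"
    and lp: "linear_pseudometric R \<rho>"
    and \<rho>m: "(\<lambda>p. \<rho> (fst p) (snd p)) \<in> borel_measurable (borel \<Otimes>\<^sub>M borel)"
    and bnd: "\<forall>x y. \<bar>\<rho> x y\<bar> \<le> B"
begin

definition ff :: "'a \<Rightarrow> real" where
  "ff a = (if (z0, a) \<in> R then \<rho> z0 a else - \<rho> a z0)"

lemma R_refl: "(a, a) \<in> R"
  using lo unfolding linear_order_on_def partial_order_on_def preorder_on_def refl_on_def by auto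

lemma R_trans: "(a, b) \<in> R \<Longrightarrow> (b, c) \<in> R \<Longrightarrow> (a, c) \<in> R"
  using lo unfolding linear_order_on_def partial_order_on_def preorder_on_def trans_def by blast

lemma R_total: "(a, b) \<in> R \<or> (b, a) \<in> R"
  using lo R_refl unfolding linear_order_on_def total_on_def by (metis UNIV_I)

lemma pm: "\<rho> x x = 0" "0 \<le> \<rho> x y" "\<rho> x y = \<rho> y x"
  and lin: "(a, b) \<in> R \<Longrightarrow> (b, c) \<in> R \<Longrightarrow> \<rho> a c = \<rho> a b + \<rho> b c"
  using lp unfolding linear_pseudometric_def pseudometric_def by auto

lemma ff_R: assumes "(a, b) \<in> R" shows "ff b - ff a = \<rho> a b"
proof (cases "(z0, a) \<in> R")
  case True
  then have "(z0, b) \<in> R" using R_trans assms by blast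
  then show ?thesis using True lin[OF True assms] by (simp add: ff_def)
next
  case False
  then have oa: "(a, z0) \<in> R" using R_total by blast
  show ?thesis
  proof (cases "(z0, b) \<in> R")
    case True
    then show ?thesis using False lin[OF oa True] by (simp add: ff_def)
  next
    case F2: False
    then have bo: "(b, z0) \<in> R" using R_total by blast
    then show ?thesis using False F2 lin[OF assms bo] by (simp add: ff_def)
  qed
qed

lemma rho_ff: "\<rho> a b = \<bar>ff a - ff b\<bar>"
proof (cases "(a, b) \<in> R")
  case True
  then show ?thesis using ff_R[OF True] pm(2)[of a b] by simp
next
  case False
  then have ba: "(b, a) \<in> R" using R_total by blast
  then show ?thesis using ff_R[OF ba] pm(2)[of b a] pm(3)[of a b] by simp
qed

lemma ff_mono: "(a, b) \<in> R \<Longrightarrow> ff a \<le> ff b"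
  by (metis ff_R pm(2) diff_ge_0_iff_ge)

lemma ff_bnd: "\<bar>ff a\<bar> \<le> B"
  using bnd by (auto simp: ff_def)

lemma meas_pair1: "(\<lambda>a. (z0, a)) \<in> borel \<rightarrow>\<^sub>M borel \<Otimes>\<^sub>M borel"
  by measurable

lemma ff_meas: "ff \<in> borel_measurable borel"
proof -
  have 1: "(\<lambda>a. \<rho> z0 a) \<in> borel_measurable borel"
    using measurable_comp[OF meas_pair1 \<rho>m] by (simp add: comp_def)
  have 2: "(\<lambda>a. \<rho> a z0) \<in> borel_measurable borel"
    using measurable_comp[OF _ \<rho>m, of "\<lambda>a. (a, z0)"] by (simp add: comp_def)
  have 3: "{a \<in> space borel. (z0, a) \<in> R} \<in> sets borel"
    using measurable_sets[OF meas_pair1 Rm] by (simp add: vimage_def)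
  show ?thesis unfolding ff_def
    by (rule measurable_If[OF 1 borel_measurable_uminus[OF 2] 3])
qed

lemma cpl_meas:
  assumes "sets \<pi> = sets (borel \<Otimes>\<^sub>M borel)" "g \<in> borel_measurable (borel \<Otimes>\<^sub>M borel)"
  shows "g \<in> borel_measurable \<pi>"
  using assms measurable_cong_sets[OF assms(1) refl] by simp

lemma rho_meas: "(\<lambda>p. \<rho> (fst p) (snd p)) \<in> borel_measurable (borel \<Otimes>\<^sub>M borel)"
  by (rule \<rho>m)

lemma ff_fst_meas: "(\<lambda>p. ff (fst p)) \<in> borel_measurable (borel \<Otimes>\<^sub>M borel)"
  using ff_meas by measurable

lemma ff_snd_meas: "(\<lambda>p. ff (snd p)) \<in> borel_measurable (borel \<Otimes>\<^sub>M borel)"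
  using ff_meas by measurable

lemma cpl_basic:
  assumes "coupling \<mu> \<nu> \<pi>"
  shows "integrable \<pi> (\<lambda>p. \<rho> (fst p) (snd p))"
    and "integrable \<pi> (\<lambda>p. ff (fst p))"
    and "integrable \<pi> (\<lambda>p. ff (snd p))"
    and "(\<integral>p. ff (fst p) \<partial>\<pi>) = (\<integral>x. ff x \<partial>\<mu>)"
    and "(\<integral>p. ff (snd p) \<partial>\<pi>) = (\<integral>x. ff x \<partial>\<nu>)"
    and "0 \<le> (\<integral>p. \<rho> (fst p) (snd p) \<partial>\<pi>)"
proof -
  have ps: "prob_space \<pi>" and ss: "sets \<pi> = sets (borel \<Otimes>\<^sub>M borel)"
    and d1: "distr \<pi> borel fst = \<mu>" and d2: "distr \<pi> borel snd = \<nu>"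
    using assms unfolding coupling_def by auto
  interpret prob_space \<pi> by (rule ps)
  have m1: "(\<lambda>p. \<rho> (fst p) (snd p)) \<in> borel_measurable \<pi>" by (rule cpl_meas[OF ss \<rho>m])
  have m2: "(\<lambda>p. ff (fst p)) \<in> borel_measurable \<pi>" by (rule cpl_meas[OF ss ff_fst_meas])
  have m3: "(\<lambda>p. ff (snd p)) \<in> borel_measurable \<pi>" by (rule cpl_meas[OF ss ff_snd_meas])
  show "integrable \<pi> (\<lambda>p. \<rho> (fst p) (snd p))"
    by (rule integrable_const_bound[where B=B]) (use bnd m1 in auto)
  show "integrable \<pi> (\<lambda>p. ff (fst p))"
    by (rule integrable_const_bound[where B=B]) (use ff_bnd m2 in auto)
  show "integrable \<pi> (\<lambda>p. ff (snd p))"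
    by (rule integrable_const_bound[where B=B]) (use ff_bnd m3 in auto)
  have mf: "fst \<in> \<pi> \<rightarrow>\<^sub>M borel" by (subst measurable_cong_sets[OF ss refl]) (rule measurable_fst)
  have ms: "snd \<in> \<pi> \<rightarrow>\<^sub>M borel" by (subst measurable_cong_sets[OF ss refl]) (rule measurable_snd)
  show "(\<integral>p. ff (fst p) \<partial>\<pi>) = (\<integral>x. ff x \<partial>\<mu>)"
    using integral_distr[OF mf ff_meas] d1 by simp
  show "(\<integral>p. ff (snd p) \<partial>\<pi>) = (\<integral>x. ff x \<partial>\<nu>)"
    using integral_distr[OF ms ff_meas] d2 by simp
  show "0 \<le> (\<integral>p. \<rho> (fst p) (snd p) \<partial>\<pi>)"
    using pm(2) by (simp add: Bochner_Integration.integral_nonneg)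
qed

lemma cost_ge:
  assumes "coupling \<mu> \<nu> \<pi>"
  shows "\<bar>(\<integral>x. ff x \<partial>\<nu>) - (\<integral>x. ff x \<partial>\<mu>)\<bar> \<le> (\<integral>p. \<rho> (fst p) (snd p) \<partial>\<pi>)"
proof -
  note b = cpl_basic[OF assms]
  have "(\<integral>x. ff x \<partial>\<nu>) - (\<integral>x. ff x \<partial>\<mu>) = (\<integral>p. ff (snd p) - ff (fst p) \<partial>\<pi>)"
    using b by (simp add: Bochner_Integration.integral_diff)
  also have "\<dots> \<le> (\<integral>p. \<rho> (fst p) (snd p) \<partial>\<pi>)"
    by (rule integral_mono) (use b in \<open>auto simp: rho_ff\<close>)
  finally have 1: "(\<integral>x. ff x \<partial>\<nu>) - (\<integral>x. ff x \<partial>\<mu>) \<le> (\<integral>p. \<rho> (fst p) (snd p) \<partial>\<pi>)" .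
  have "(\<integral>x. ff x \<partial>\<mu>) - (\<integral>x. ff x \<partial>\<nu>) = (\<integral>p. ff (fst p) - ff (snd p) \<partial>\<pi>)"
    using b by (simp add: Bochner_Integration.integral_diff)
  also have "\<dots> \<le> (\<integral>p. \<rho> (fst p) (snd p) \<partial>\<pi>)"
    by (rule integral_mono) (use b in \<open>auto simp: rho_ff\<close>)
  finally show ?thesis using 1 by linarith
qed

lemma cost_R:
  assumes "coupling \<mu> \<nu> \<pi>" "AE p in \<pi>. (fst p, snd p) \<in> R"
  shows "(\<integral>p. \<rho> (fst p) (snd p) \<partial>\<pi>) = (\<integral>x. ff x \<partial>\<nu>) - (\<integral>x. ff x \<partial>\<mu>)"
proof -
  note b = cpl_basic[OF assms(1)]
  have "(\<integral>p. \<rho> (fst p) (snd p) \<partial>\<pi>) = (\<integral>p. ff (snd p) - ff (fst p) \<partial>\<pi>)"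
    by (rule integral_cong_AE)
      (use b assms(2) ff_R in \<open>auto intro: borel_measurable_integrable\<close>)
  also have "\<dots> = (\<integral>x. ff x \<partial>\<nu>) - (\<integral>x. ff x \<partial>\<mu>)"
    using b by (simp add: Bochner_Integration.integral_diff)
  finally show ?thesis .
qed

lemma cost_R':
  assumes "coupling \<mu> \<nu> \<pi>" "AE p in \<pi>. (snd p, fst p) \<in> R"
  shows "(\<integral>p. \<rho> (fst p) (snd p) \<partial>\<pi>) = (\<integral>x. ff x \<partial>\<mu>) - (\<integral>x. ff x \<partial>\<nu>)"
proof -
  note b = cpl_basic[OF assms(1)]
  have "(\<integral>p. \<rho> (fst p) (snd p) \<partial>\<pi>) = (\<integral>p. ff (fst p) - ff (snd p) \<partial>\<pi>)"
    by (rule integral_cong_AE)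
      (use b assms(2) ff_R pm(3) in \<open>auto intro: borel_measurable_integrable\<close>)
  also have "\<dots> = (\<integral>x. ff x \<partial>\<mu>) - (\<integral>x. ff x \<partial>\<nu>)"
    using b by (simp add: Bochner_Integration.integral_diff)
  finally show ?thesis .
qed

lemma K_bdd: "bdd_below ((\<lambda>\<pi>. \<integral>p. \<rho> (fst p) (snd p) \<partial>\<pi>) ` {\<pi>. coupling \<mu> \<nu> \<pi>})"
  by (rule bdd_belowI[where m=0]) (use cpl_basic(6) in auto)

lemma K_eq:
  assumes "coupling \<mu> \<nu> \<pi>"
    and "(\<integral>p. \<rho> (fst p) (snd p) \<partial>\<pi>) = \<bar>(\<integral>x. ff x \<partial>\<nu>) - (\<integral>x. ff x \<partial>\<mu>)\<bar>"
  shows "kantorovich \<rho> \<mu> \<nu> = \<bar>(\<integral>x. ff x \<partial>\<nu>) - (\<integral>x. ff x \<partial>\<mu>)\<bar>"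
proof (rule antisym)
  show "kantorovich \<rho> \<mu> \<nu> \<le> \<bar>(\<integral>x. ff x \<partial>\<nu>) - (\<integral>x. ff x \<partial>\<mu>)\<bar>"
    unfolding kantorovich_def using cINF_lower[OF K_bdd, of \<pi>] assms by auto
  show "\<bar>(\<integral>x. ff x \<partial>\<nu>) - (\<integral>x. ff x \<partial>\<mu>)\<bar> \<le> kantorovich \<rho> \<mu> \<nu>"
    unfolding kantorovich_def using assms(1) cost_ge by (intro cINF_greatest) auto
qed

declare ff_meas[measurable]

definition bb :: "real \<Rightarrow> 'a \<Rightarrow> int" where
  "bb e y = \<lfloor>ff y / e\<rfloor>"

definition cc :: "real \<Rightarrow> 'a measure \<Rightarrow> int \<Rightarrow> ennreal" where
  "cc e \<nu> k = emeasure \<nu> {u. bb e u = k}"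

lemma bb_meas[measurable]: "bb e \<in> borel \<rightarrow>\<^sub>M count_space UNIV"
  unfolding bb_def by measurable

lemma bb_set: "{u. bb e u = k} \<in> sets borel"
proof -
  have "{u. bb e u = k} = bb e -` {k} \<inter> space borel" by auto
  also have "\<dots> \<in> sets borel" by (rule measurable_sets[OF bb_meas]) auto
  finally show ?thesis .
qed

lemma bb_close: assumes "bb e a = bb e b" "e > 0" shows "ff a < ff b + e"
proof -
  have "ff a / e < ff b / e + 1"
    using assms(1) unfolding bb_def by linarith
  then show ?thesis using assms(2) by (smt (verit, best) diff_divide_distrib divide_less_eq_1)
qed

lemma bin_int:
  assumes ps: "prob_space M" and h: "h \<in> M \<rightarrow>\<^sub>M borel" and d: "distr M borel h = \<nu>"
  shows "(\<integral>\<^sup>+ q. (if bb e (h q) = k \<and> cc e \<nu> k \<noteq> 0 then 1 / cc e \<nu> k else 0) \<partial>M)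
       = (if cc e \<nu> k \<noteq> 0 then 1 else 0)"
proof -
  interpret prob_space M by (rule ps)
  have A: "{q \<in> space M. bb e (h q) = k} \<in> sets M"
    using measurable_sets[OF h bb_set[of e k]] by (simp add: vimage_def Int_def conj_commute)
  have em: "emeasure M {q \<in> space M. bb e (h q) = k} = cc e \<nu> k"
    unfolding cc_def d[symmetric] using emeasure_distr[OF h bb_set[of e k]]
    by (simp add: vimage_def Int_def conj_commute)
  have fin: "cc e \<nu> k < \<top>"
    using em emeasure_le_1[of "{q \<in> space M. bb e (h q) = k}"] by (metis ennreal_one_less_top order.strict_trans1)
  have "(\<integral>\<^sup>+ q. (if bb e (h q) = k \<and> cc e \<nu> k \<noteq> 0 then 1 / cc e \<nu> k else 0) \<partial>M)
      = (\<integral>\<^sup>+ q. (if cc e \<nu> k \<noteq> 0 then 1 / cc e \<nu> k else 0) * indicator {q \<in> space M. bb e (h q) = k} q \<partial>M)"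
    by (rule nn_integral_cong) (auto simp: indicator_def)
  also have "\<dots> = (if cc e \<nu> k \<noteq> 0 then 1 / cc e \<nu> k else 0) * cc e \<nu> k"
    using nn_integral_cmult_indicator[OF A] em by simp
  also have "\<dots> = (if cc e \<nu> k \<noteq> 0 then 1 else 0)"
    using fin by (auto simp: ennreal_divide_times)
  finally show ?thesis .
qed

lemma AE_cc:
  assumes "sets \<nu> = sets borel"
  shows "AE y in \<nu>. cc e \<nu> (bb e y) \<noteq> 0"
proof -
  have "\<forall>k\<in>UNIV. AE y in \<nu>. bb e y = k \<longrightarrow> cc e \<nu> k \<noteq> 0"
  proof
    fix k :: int
    show "AE y in \<nu>. bb e y = k \<longrightarrow> cc e \<nu> k \<noteq> 0"
    proof (cases "cc e \<nu> k = 0")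
      case True
      have N: "{u. bb e u = k} \<in> null_sets \<nu>"
        using True bb_set[of e k] assms unfolding cc_def by (auto simp: null_sets_def)
      show ?thesis by (rule AE_I'[OF N]) auto
    qed simp
  qed
  then have "AE y in \<nu>. \<forall>k\<in>UNIV. bb e y = k \<longrightarrow> cc e \<nu> k \<noteq> 0"
    by (subst AE_ball_countable) auto
  then show ?thesis by eventually_elim auto
qed

lemma bin_meas:
  assumes h: "h \<in> M \<rightarrow>\<^sub>M borel"
  shows "(\<lambda>q. if bb e (h q) = k \<and> P then c else (0::ennreal)) \<in> borel_measurable M"
proof -
  have "(\<lambda>y. if bb e y = k \<and> P then c else (0::ennreal)) \<in> borel_measurable borel"
    by measurable
  from measurable_compose[OF h this] show ?thesis .
qed

lemma glue:
  assumes c1: "coupling \<mu> \<nu> \<pi>1" and r1: "AE p in \<pi>1. (fst p, snd p) \<in> R"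
    and c2: "coupling \<nu> \<eta> \<pi>2" and r2: "AE p in \<pi>2. (fst p, snd p) \<in> R"
    and e: "e > 0"
  shows "\<exists>\<pi>. coupling \<mu> \<eta> \<pi> \<and>
    (\<integral>p. \<rho> (fst p) (snd p) \<partial>\<pi>) \<le> (\<integral>x. ff x \<partial>\<eta>) - (\<integral>x. ff x \<partial>\<mu>) + 2 * e"
proof -
  have ps1: "prob_space \<pi>1" and ss1: "sets \<pi>1 = sets (borel \<Otimes>\<^sub>M borel)"
    and d11: "distr \<pi>1 borel fst = \<mu>" and d12: "distr \<pi>1 borel snd = \<nu>"
    using c1 unfolding coupling_def by auto
  have ps2: "prob_space \<pi>2" and ss2: "sets \<pi>2 = sets (borel \<Otimes>\<^sub>M borel)"
    and d21: "distr \<pi>2 borel fst = \<nu>" and d22: "distr \<pi>2 borel snd = \<eta>"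
    using c2 unfolding coupling_def by auto
  interpret p1: prob_space \<pi>1 by (rule ps1)
  interpret p2: prob_space \<pi>2 by (rule ps2)
  interpret P: pair_sigma_finite \<pi>1 \<pi>2 by unfold_locales
  let ?M2 = "borel \<Otimes>\<^sub>M borel :: ('a \<times> 'a) measure"
  have mfst1: "fst \<in> \<pi>1 \<rightarrow>\<^sub>M borel" by (subst measurable_cong_sets[OF ss1 refl]) (rule measurable_fst)
  have msnd1: "snd \<in> \<pi>1 \<rightarrow>\<^sub>M borel" by (subst measurable_cong_sets[OF ss1 refl]) (rule measurable_snd)
  have mfst2: "fst \<in> \<pi>2 \<rightarrow>\<^sub>M borel" by (subst measurable_cong_sets[OF ss2 refl]) (rule measurable_fst)
  have msnd2: "snd \<in> \<pi>2 \<rightarrow>\<^sub>M borel" by (subst measurable_cong_sets[OF ss2 refl]) (rule measurable_snd)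
  have sp1: "space \<pi>1 = UNIV" using sets_eq_imp_space_eq[OF ss1] by (simp add: space_pair_measure)
  have sp2: "space \<pi>2 = UNIV" using sets_eq_imp_space_eq[OF ss2] by (simp add: space_pair_measure)
  have ssO: "sets (\<pi>1 \<Otimes>\<^sub>M \<pi>2) = sets (?M2 \<Otimes>\<^sub>M ?M2)"
    by (rule sets_pair_measure_cong[OF ss1 ss2])
  have spO: "space (\<pi>1 \<Otimes>\<^sub>M \<pi>2) = UNIV"
    using sets_eq_imp_space_eq[OF ssO] by (simp add: space_pair_measure)
  define w where "w q = (if bb e (snd (fst q)) = bb e (fst (snd q)) \<and> cc e \<nu> (bb e (snd (fst q))) \<noteq> 0
      then 1 / cc e \<nu> (bb e (snd (fst q))) else 0)" for q :: "('a \<times> 'a) \<times> ('a \<times> 'a)"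
  have wm0: "w \<in> borel_measurable (?M2 \<Otimes>\<^sub>M ?M2)"
  proof -
    have "(\<lambda>q. (\<lambda>k q. if k = bb e (fst (snd q)) \<and> cc e \<nu> k \<noteq> 0 then 1 / cc e \<nu> k else 0)
        (bb e (snd (fst q))) q) \<in> borel_measurable (?M2 \<Otimes>\<^sub>M ?M2)"
      by (rule measurable_compose_countable) measurable
    then show ?thesis unfolding w_def by simp
  qed
  have wm: "w \<in> borel_measurable (\<pi>1 \<Otimes>\<^sub>M \<pi>2)"
    by (subst measurable_cong_sets[OF ssO refl]) (rule wm0)
  define g where "g q = (fst (fst q), snd (snd q))" for q :: "('a \<times> 'a) \<times> ('a \<times> 'a)"
  have gm: "g \<in> density (\<pi>1 \<Otimes>\<^sub>M \<pi>2) w \<rightarrow>\<^sub>M ?M2"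
  proof -
    have "g \<in> ?M2 \<Otimes>\<^sub>M ?M2 \<rightarrow>\<^sub>M ?M2" unfolding g_def by measurable
    then show ?thesis by (subst measurable_cong_sets[of _ "?M2 \<Otimes>\<^sub>M ?M2"]) (use ssO in auto)
  qed
  define \<pi> where "\<pi> = distr (density (\<pi>1 \<Otimes>\<^sub>M \<pi>2) w) ?M2 g"
  have ss: "sets \<pi> = sets ?M2" unfolding \<pi>_def by simp
  define D where "D = density (\<pi>1 \<Otimes>\<^sub>M \<pi>2) w"
  have spD: "space D = UNIV" unfolding D_def using spO by simp
  have ssD: "sets D = sets (\<pi>1 \<Otimes>\<^sub>M \<pi>2)" unfolding D_def by simp
  have AEnu: "AE y in \<nu>. cc e \<nu> (bb e y) \<noteq> 0"
    by (rule AE_cc) (use d12 in auto)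
  have AE1: "AE q1 in \<pi>1. cc e \<nu> (bb e (snd q1)) \<noteq> 0"
    by (rule AE_distrD[OF msnd1]) (subst d12, rule AEnu)
  have AE2: "AE q2 in \<pi>2. cc e \<nu> (bb e (fst q2)) \<noteq> 0"
    by (rule AE_distrD[OF mfst2]) (subst d21, rule AEnu)
  have marg1: "distr \<pi> borel fst = \<mu>"
  proof -
    have "distr \<pi> borel fst = distr D borel (fst \<circ> g)"
      unfolding \<pi>_def D_def by (rule distr_distr[OF measurable_fst gm])
    also have "\<dots> = \<mu>"
    proof (rule measure_eqI)
      show "sets (distr D borel (fst \<circ> g)) = sets \<mu>" using d11[symmetric] by simp
      fix A assume A: "A \<in> sets (distr D borel (fst \<circ> g))"
      then have Ab: "A \<in> sets borel" by simp
      have fgm: "fst \<circ> g \<in> D \<rightarrow>\<^sub>M borel" using gm unfolding D_def by simp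
      have S: "{q. fst (fst q) \<in> A} \<in> sets (\<pi>1 \<Otimes>\<^sub>M \<pi>2)"
        using measurable_sets[OF fgm Ab] spD ssD by (simp add: g_def vimage_def)
      have "emeasure (distr D borel (fst \<circ> g)) A = emeasure D {q. fst (fst q) \<in> A}"
        using emeasure_distr[OF fgm Ab] spD by (simp add: g_def vimage_def)
      also have "\<dots> = (\<integral>\<^sup>+ q. w q * indicator {q. fst (fst q) \<in> A} q \<partial>(\<pi>1 \<Otimes>\<^sub>M \<pi>2))"
        unfolding D_def using emeasure_density[OF wm S] by simp
      also have "\<dots> = (\<integral>\<^sup>+ q1. \<integral>\<^sup>+ q2. w (q1, q2) * indicator A (fst q1) \<partial>\<pi>2 \<partial>\<pi>1)"
      proof -
        have im: "(\<lambda>q. w q * indicator {q. fst (fst q) \<in> A} q) \<in> borel_measurable (\<pi>1 \<Otimes>\<^sub>M \<pi>2)"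
          by (rule borel_measurable_times_ennreal[OF wm borel_measurable_indicator[OF S]])
        have "(\<integral>\<^sup>+ q1. \<integral>\<^sup>+ q2. w (q1, q2) * indicator {q. fst (fst q) \<in> A} (q1, q2) \<partial>\<pi>2 \<partial>\<pi>1)
          = (\<integral>\<^sup>+ q. w q * indicator {q. fst (fst q) \<in> A} q \<partial>(\<pi>1 \<Otimes>\<^sub>M \<pi>2))"
          by (rule p2.nn_integral_fst[OF im])
        then show ?thesis by (simp add: indicator_def)
      qed
      also have "\<dots> = (\<integral>\<^sup>+ q1. indicator A (fst q1) * (if cc e \<nu> (bb e (snd q1)) \<noteq> 0 then 1 else 0) \<partial>\<pi>1)"
      proof (rule nn_integral_cong)
        fix q1 :: "'a \<times> 'a"
        have "(\<integral>\<^sup>+ q2. w (q1, q2) * indicator A (fst q1) \<partial>\<pi>2)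
          = (\<integral>\<^sup>+ q2. indicator A (fst q1) * (if bb e (fst q2) = bb e (snd q1) \<and> cc e \<nu> (bb e (snd q1)) \<noteq> 0 then 1 / cc e \<nu> (bb e (snd q1)) else 0) \<partial>\<pi>2)"
          by (rule nn_integral_cong) (auto simp: w_def mult.commute)
        also have "\<dots> = indicator A (fst q1) * (\<integral>\<^sup>+ q2. (if bb e (fst q2) = bb e (snd q1) \<and> cc e \<nu> (bb e (snd q1)) \<noteq> 0 then 1 / cc e \<nu> (bb e (snd q1)) else 0) \<partial>\<pi>2)"
          by (rule nn_integral_cmult[OF bin_meas[OF mfst2]])
        also have "\<dots> = indicator A (fst q1) * (if cc e \<nu> (bb e (snd q1)) \<noteq> 0 then 1 else 0)"
          by (subst bin_int[OF ps2 mfst2 d21]) simp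
        finally show "(\<integral>\<^sup>+ q2. w (q1, q2) * indicator A (fst q1) \<partial>\<pi>2) = indicator A (fst q1) * (if cc e \<nu> (bb e (snd q1)) \<noteq> 0 then 1 else 0)" .
      qed
      also have "\<dots> = (\<integral>\<^sup>+ q1. indicator A (fst q1) \<partial>\<pi>1)"
        by (rule nn_integral_cong_AE) (use AE1 in \<open>eventually_elim, simp\<close>)
      also have "\<dots> = emeasure \<pi>1 (fst -` A \<inter> space \<pi>1)"
      proof -
        have "(\<integral>\<^sup>+ q1. indicator A (fst q1) \<partial>\<pi>1) = (\<integral>\<^sup>+ q1. indicator (fst -` A \<inter> space \<pi>1) q1 \<partial>\<pi>1)"
          by (rule nn_integral_cong) (simp add: sp1 indicator_def)
        then show ?thesis using measurable_sets[OF mfst1 Ab] by simp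
      qed
      also have "\<dots> = emeasure \<mu> A"
        using emeasure_distr[OF mfst1 Ab] d11 by simp
      finally show "emeasure (distr D borel (fst \<circ> g)) A = emeasure \<mu> A" .
    qed
    finally show ?thesis .
  qed
  have marg2: "distr \<pi> borel snd = \<eta>"
  proof -
    have "distr \<pi> borel snd = distr D borel (snd \<circ> g)"
      unfolding \<pi>_def D_def by (rule distr_distr[OF measurable_snd gm])
    also have "\<dots> = \<eta>"
    proof (rule measure_eqI)
      show "sets (distr D borel (snd \<circ> g)) = sets \<eta>" using d22[symmetric] by simp
      fix A assume A: "A \<in> sets (distr D borel (snd \<circ> g))"
      then have Ab: "A \<in> sets borel" by simp
      have fgm: "snd \<circ> g \<in> D \<rightarrow>\<^sub>M borel" using gm unfolding D_def by simp
      have S: "{q. snd (snd q) \<in> A} \<in> sets (\<pi>1 \<Otimes>\<^sub>M \<pi>2)"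
        using measurable_sets[OF fgm Ab] spD ssD by (simp add: g_def vimage_def)
      have "emeasure (distr D borel (snd \<circ> g)) A = emeasure D {q. snd (snd q) \<in> A}"
        using emeasure_distr[OF fgm Ab] spD by (simp add: g_def vimage_def)
      also have "\<dots> = (\<integral>\<^sup>+ q. w q * indicator {q. snd (snd q) \<in> A} q \<partial>(\<pi>1 \<Otimes>\<^sub>M \<pi>2))"
        unfolding D_def using emeasure_density[OF wm S] by simp
      also have "\<dots> = (\<integral>\<^sup>+ q2. \<integral>\<^sup>+ q1. w (q1, q2) * indicator A (snd q2) \<partial>\<pi>1 \<partial>\<pi>2)"
      proof -
        have im: "(\<lambda>q. w q * indicator {q. snd (snd q) \<in> A} q) \<in> borel_measurable (\<pi>1 \<Otimes>\<^sub>M \<pi>2)"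
          by (rule borel_measurable_times_ennreal[OF wm borel_measurable_indicator[OF S]])
        have "(\<integral>\<^sup>+ q2. \<integral>\<^sup>+ q1. w (q1, q2) * indicator {q. snd (snd q) \<in> A} (q1, q2) \<partial>\<pi>1 \<partial>\<pi>2)
          = (\<integral>\<^sup>+ q. w q * indicator {q. snd (snd q) \<in> A} q \<partial>(\<pi>1 \<Otimes>\<^sub>M \<pi>2))"
          by (rule P.nn_integral_snd[OF im])
        then show ?thesis by (simp add: indicator_def)
      qed
      also have "\<dots> = (\<integral>\<^sup>+ q2. indicator A (snd q2) * (if cc e \<nu> (bb e (fst q2)) \<noteq> 0 then 1 else 0) \<partial>\<pi>2)"
      proof (rule nn_integral_cong)
        fix q2 :: "'a \<times> 'a"
        have "(\<integral>\<^sup>+ q1. w (q1, q2) * indicator A (snd q2) \<partial>\<pi>1)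
          = (\<integral>\<^sup>+ q1. indicator A (snd q2) * (if bb e (snd q1) = bb e (fst q2) \<and> cc e \<nu> (bb e (fst q2)) \<noteq> 0 then 1 / cc e \<nu> (bb e (fst q2)) else 0) \<partial>\<pi>1)"
          by (rule nn_integral_cong) (auto simp: w_def mult.commute)
        also have "\<dots> = indicator A (snd q2) * (\<integral>\<^sup>+ q1. (if bb e (snd q1) = bb e (fst q2) \<and> cc e \<nu> (bb e (fst q2)) \<noteq> 0 then 1 / cc e \<nu> (bb e (fst q2)) else 0) \<partial>\<pi>1)"
          by (rule nn_integral_cmult[OF bin_meas[OF msnd1]])
        also have "\<dots> = indicator A (snd q2) * (if cc e \<nu> (bb e (fst q2)) \<noteq> 0 then 1 else 0)"
          by (subst bin_int[OF ps1 msnd1 d12]) simp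
        finally show "(\<integral>\<^sup>+ q1. w (q1, q2) * indicator A (snd q2) \<partial>\<pi>1) = indicator A (snd q2) * (if cc e \<nu> (bb e (fst q2)) \<noteq> 0 then 1 else 0)" .
      qed
      also have "\<dots> = (\<integral>\<^sup>+ q2. indicator A (snd q2) \<partial>\<pi>2)"
        by (rule nn_integral_cong_AE) (use AE2 in \<open>eventually_elim, simp\<close>)
      also have "\<dots> = emeasure \<pi>2 (snd -` A \<inter> space \<pi>2)"
      proof -
        have "(\<integral>\<^sup>+ q2. indicator A (snd q2) \<partial>\<pi>2) = (\<integral>\<^sup>+ q2. indicator (snd -` A \<inter> space \<pi>2) q2 \<partial>\<pi>2)"
          by (rule nn_integral_cong) (simp add: sp2 indicator_def)
        then show ?thesis using measurable_sets[OF msnd2 Ab] by simp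
      qed
      also have "\<dots> = emeasure \<eta> A"
        using emeasure_distr[OF msnd2 Ab] d22 by simp
      finally show "emeasure (distr D borel (snd \<circ> g)) A = emeasure \<eta> A" .
    qed
    finally show ?thesis .
  qed
  have mfstp: "fst \<in> \<pi> \<rightarrow>\<^sub>M borel" by (subst measurable_cong_sets[OF ss refl]) (rule measurable_fst)
  have spp: "space \<pi> = UNIV" using sets_eq_imp_space_eq[OF ss] by (simp add: space_pair_measure)
  have psmu: "prob_space \<mu>" using p1.prob_space_distr[OF mfst1] d11 by simp
  have "emeasure \<pi> (space \<pi>) = emeasure (distr \<pi> borel fst) (space borel)"
    by (subst emeasure_distr[OF mfstp]) (auto simp: spp)
  also have "\<dots> = 1" using marg1 prob_space.emeasure_space_1[OF psmu] d11
    by (metis space_borel space_distr)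
  finally have psp: "prob_space \<pi>" by (rule prob_spaceI)
  have cpl: "coupling \<mu> \<eta> \<pi>" unfolding coupling_def using psp ss marg1 marg2 by simp
  have AEO: "AE q in \<pi>1 \<Otimes>\<^sub>M \<pi>2. fst q \<in> R \<and> snd q \<in> R"
  proof (rule P.AE_pair_measure)
    have "{x \<in> space (\<pi>1 \<Otimes>\<^sub>M \<pi>2). fst x \<in> R \<and> snd x \<in> R} = R \<times> R" using spO by auto
    also have "\<dots> \<in> sets (\<pi>1 \<Otimes>\<^sub>M \<pi>2)" using Rm ss1 ss2 by (intro pair_measureI) auto
    finally show "{x \<in> space (\<pi>1 \<Otimes>\<^sub>M \<pi>2). fst x \<in> R \<and> snd x \<in> R} \<in> sets (\<pi>1 \<Otimes>\<^sub>M \<pi>2)" .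
    show "AE x in \<pi>1. AE y in \<pi>2. fst (x, y) \<in> R \<and> snd (x, y) \<in> R"
      using r1
    proof eventually_elim
      case (elim x)
      show ?case using r2 by eventually_elim (use elim in auto)
    qed
  qed
  have AEp: "AE p in \<pi>. \<rho> (fst p) (snd p) \<le> ff (snd p) - ff (fst p) + 2 * e"
    unfolding \<pi>_def
  proof (subst AE_distr_iff[OF gm])
    show "{x \<in> space ?M2. \<rho> (fst x) (snd x) \<le> ff (snd x) - ff (fst x) + 2 * e} \<in> sets ?M2"
      using rho_meas by measurable
    show "AE x in density (\<pi>1 \<Otimes>\<^sub>M \<pi>2) w. \<rho> (fst (g x)) (snd (g x)) \<le> ff (snd (g x)) - ff (fst (g x)) + 2 * e"
      unfolding AE_density[OF wm] using AEO
    proof eventually_elim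
      case (elim q)
      show ?case
      proof
        assume "0 < w q"
        then have eq: "bb e (snd (fst q)) = bb e (fst (snd q))" unfolding w_def by (auto split: if_splits)
        have 1: "ff (fst (fst q)) \<le> ff (snd (fst q))" using ff_mono elim by (metis prod.collapse)
        have 2: "ff (fst (snd q)) \<le> ff (snd (snd q))" using ff_mono elim by (metis prod.collapse)
        have 3: "ff (snd (fst q)) < ff (fst (snd q)) + e" by (rule bb_close[OF eq e])
        show "\<rho> (fst (g q)) (snd (g q)) \<le> ff (snd (g q)) - ff (fst (g q)) + 2 * e"
          unfolding g_def using 1 2 3 e by (auto simp: rho_ff abs_le_iff)
      qed
    qed
  qed
  interpret pp: prob_space \<pi> by (rule psp)
  note b = cpl_basic[OF cpl]
  have "(\<integral>p. \<rho> (fst p) (snd p) \<partial>\<pi>) \<le> (\<integral>p. ff (snd p) - ff (fst p) + 2 * e \<partial>\<pi>)"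
    by (rule integral_mono_AE) (use b AEp in auto)
  also have "\<dots> = (\<integral>p. ff (snd p) \<partial>\<pi>) - (\<integral>p. ff (fst p) \<partial>\<pi>) + 2 * e"
    using b pp.prob_space by (simp add: Bochner_Integration.integral_diff Bochner_Integration.integral_add)
  also have "\<dots> = (\<integral>x. ff x \<partial>\<eta>) - (\<integral>x. ff x \<partial>\<mu>) + 2 * e" using b by simp
  finally show ?thesis using cpl by blast
qed

lemma main:
  shows "(\<forall>\<mu> \<nu> \<pi>. prob_on \<mu> \<longrightarrow> prob_on \<nu> \<longrightarrow> ordered_coupling R \<mu> \<nu> \<pi> \<longrightarrow>
            (\<integral>p. \<rho> (fst p) (snd p) \<partial>\<pi>) = kantorovich \<rho> \<mu> \<nu>)
       \<and> (\<forall>\<mu> \<nu> \<eta>. prob_on \<mu> \<longrightarrow> prob_on \<nu> \<longrightarrow> prob_on \<eta> \<longrightarrow>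
            stoch_le R \<mu> \<nu> \<longrightarrow> stoch_le R \<nu> \<eta> \<longrightarrow>
            kantorovich \<rho> \<mu> \<eta> = kantorovich \<rho> \<mu> \<nu> + kantorovich \<rho> \<nu> \<eta>)"
proof (intro conjI allI impI)
  fix \<mu> \<nu> \<pi> :: "'a measure" and \<pi>' :: "('a \<times> 'a) measure"
  assume oc: "ordered_coupling R \<mu> \<nu> \<pi>'"
  then have c: "coupling \<mu> \<nu> \<pi>'" unfolding ordered_coupling_def by simp
  have ge: "\<bar>(\<integral>x. ff x \<partial>\<nu>) - (\<integral>x. ff x \<partial>\<mu>)\<bar> \<le> (\<integral>p. \<rho> (fst p) (snd p) \<partial>\<pi>')"
    by (rule cost_ge[OF c])
  have J: "(\<integral>p. \<rho> (fst p) (snd p) \<partial>\<pi>') = \<bar>(\<integral>x. ff x \<partial>\<nu>) - (\<integral>x. ff x \<partial>\<mu>)\<bar>"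
    using oc unfolding ordered_coupling_def
  proof (elim conjE disjE)
    assume "AE p in \<pi>'. (fst p, snd p) \<in> R"
    from cost_R[OF c this] ge show ?thesis by linarith
  next
    assume "AE p in \<pi>'. (snd p, fst p) \<in> R"
    from cost_R'[OF c this] ge show ?thesis by linarith
  qed
  show "(\<integral>p. \<rho> (fst p) (snd p) \<partial>\<pi>') = kantorovich \<rho> \<mu> \<nu>"
    using K_eq[OF c J] J by simp
next
  fix \<mu> \<nu> \<eta> :: "'a measure"
  assume "stoch_le R \<mu> \<nu>" "stoch_le R \<nu> \<eta>"
  then obtain \<pi>1 \<pi>2 where c1: "coupling \<mu> \<nu> \<pi>1" and r1: "AE p in \<pi>1. (fst p, snd p) \<in> R"
    and c2: "coupling \<nu> \<eta> \<pi>2" and r2: "AE p in \<pi>2. (fst p, snd p) \<in> R"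
    unfolding stoch_le_def by blast
  define D1 where "D1 = (\<integral>x. ff x \<partial>\<nu>) - (\<integral>x. ff x \<partial>\<mu>)"
  define D2 where "D2 = (\<integral>x. ff x \<partial>\<eta>) - (\<integral>x. ff x \<partial>\<nu>)"
  have J1: "(\<integral>p. \<rho> (fst p) (snd p) \<partial>\<pi>1) = D1" unfolding D1_def by (rule cost_R[OF c1 r1])
  have J2: "(\<integral>p. \<rho> (fst p) (snd p) \<partial>\<pi>2) = D2" unfolding D2_def by (rule cost_R[OF c2 r2])
  have D1nn: "0 \<le> D1" using J1 cpl_basic(6)[OF c1] by simp
  have D2nn: "0 \<le> D2" using J2 cpl_basic(6)[OF c2] by simp
  have K1: "kantorovich \<rho> \<mu> \<nu> = D1"
    using K_eq[OF c1] J1 D1nn unfolding D1_def by simp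
  have K2: "kantorovich \<rho> \<nu> \<eta> = D2"
    using K_eq[OF c2] J2 D2nn unfolding D2_def by simp
  have lo: "D1 + D2 \<le> kantorovich \<rho> \<mu> \<eta>"
  proof -
    obtain \<pi>e where "coupling \<mu> \<eta> \<pi>e" using glue[OF c1 r1 c2 r2, of 1] by auto
    then have ne: "{\<pi>. coupling \<mu> \<eta> \<pi>} \<noteq> {}" by auto
    show ?thesis unfolding kantorovich_def
    proof (rule cINF_greatest[OF ne])
      fix \<pi> assume "\<pi> \<in> {\<pi>. coupling \<mu> \<eta> \<pi>}"
      then have "\<bar>(\<integral>x. ff x \<partial>\<eta>) - (\<integral>x. ff x \<partial>\<mu>)\<bar> \<le> (\<integral>p. \<rho> (fst p) (snd p) \<partial>\<pi>)"
        using cost_ge by auto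
      then show "D1 + D2 \<le> (\<integral>p. \<rho> (fst p) (snd p) \<partial>\<pi>)" unfolding D1_def D2_def by linarith
    qed
  qed
  have up: "kantorovich \<rho> \<mu> \<eta> \<le> D1 + D2"
  proof (rule field_le_epsilon)
    fix e :: real assume e: "0 < e"
    then have "e / 2 > 0" by simp
    from glue[OF c1 r1 c2 r2 this] obtain \<pi> where c: "coupling \<mu> \<eta> \<pi>"
      and le: "(\<integral>p. \<rho> (fst p) (snd p) \<partial>\<pi>) \<le> (\<integral>x. ff x \<partial>\<eta>) - (\<integral>x. ff x \<partial>\<mu>) + 2 * (e / 2)"
      by blast
    have "kantorovich \<rho> \<mu> \<eta> \<le> (\<integral>p. \<rho> (fst p) (snd p) \<partial>\<pi>)"
      unfolding kantorovich_def by (rule cINF_lower[OF K_bdd]) (use c in simp)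
    then show "kantorovich \<rho> \<mu> \<eta> \<le> D1 + D2 + e" using le unfolding D1_def D2_def by simp
  qed
  show "kantorovich \<rho> \<mu> \<eta> = kantorovich \<rho> \<mu> \<nu> + kantorovich \<rho> \<nu> \<eta>"
    using lo up K1 K2 by simp
qed

end

theorem lemma3p11:
  fixes R :: "('a::polish_space \<times> 'a) set" and \<rho> :: "'a \<Rightarrow> 'a \<Rightarrow> real"
  assumes "linear_order R"
    and "R \<in> sets (borel \<Otimes>\<^sub>M borel)"
    and "linear_pseudometric R \<rho>"
    and "(\<lambda>p. \<rho> (fst p) (snd p)) \<in> borel_measurable (borel \<Otimes>\<^sub>M borel)"
    and "\<exists>B. \<forall>x y. \<bar>\<rho> x y\<bar> \<le> B"
  shows "(\<forall>\<mu> \<nu> \<pi>. prob_on \<mu> \<longrightarrow> prob_on \<nu> \<longrightarrow> ordered_coupling R \<mu> \<nu> \<pi> \<longrightarrow>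
            (\<integral>p. \<rho> (fst p) (snd p) \<partial>\<pi>) = kantorovich \<rho> \<mu> \<nu>)
       \<and> (\<forall>\<mu> \<nu> \<eta>. prob_on \<mu> \<longrightarrow> prob_on \<nu> \<longrightarrow> prob_on \<eta> \<longrightarrow>
            stoch_le R \<mu> \<nu> \<longrightarrow> stoch_le R \<nu> \<eta> \<longrightarrow>
            kantorovich \<rho> \<mu> \<eta> = kantorovich \<rho> \<mu> \<nu> + kantorovich \<rho> \<nu> \<eta>)"
proof -
  obtain B where "\<forall>x y. \<bar>\<rho> x y\<bar> \<le> B" using assms(5) by blast
  from main[OF assms(1-4) this] show ?thesis .
qed

end
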